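(* Let $d\ge 2$ and consider the $(2,d)$ random access code task: Alice receives $x=x_1x_2$ with $x_1,x_2\in\{1,\dots,d\}$ uniformly at random ($N=d^2$ inputs); Bob receives $y\in\{1,2\}$ uniformly at random and outputs $z\in\{1,\dots,d\}$; the success metric is $\mathcal{S}=\frac{1}{2d^2}\sum_{x,y}p(z=x_y|x,y)$. Let $\mathcal{S}^*=\frac12\left(1+\frac{1}{\sqrt d}\right)$. There exists a quantum protocol (Alice sends states $\rho_x$, Bob performs measurements $\{M_{z|y}\}_z$, $p(z|x,y)=\operatorname{tr}(\rho_x M_{z|y})$) achieving $\mathcal{S}=\mathcal{S}^*$ whose distinguishability $\mathcal{D}_Q$ satisfies the following: every classical protocol achieving success metric at least $\mathcal{S}^*$ has distinguishability $\mathcal{D}_C$ with $\mathcal{D}_C/\mathcal{D}_Q\ge\sqrt d$. (In particular, $\mathcal{D}_Q\le 1/d$ and every such classical protocol has $\mathcal{D}_C\ge 1/\sqrt d$.)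
   Context: Quantum distinguishability: $\mathcal{D}_Q=\max_{\{M_x\}}\frac1N\sum_x\operatorname{tr}(\rho_xM_x)$ over POVMs $\{M_x\}_{x}$ ($M_x\ge0$, $\sum_xM_x=\mathbb 1$), with the Hilbert space dimension unconstrained. A classical protocol consists of an encoding $p_e(m|x)$ over messages $m$ from a finite set of arbitrary size and a decoding $p_d(z|y,m)$, giving $p(z|x,y)=\sum_m p_e(m|x)p_d(z|y,m)$; its distinguishability is $\mathcal{D}_C=\frac1N\sum_m\max_x p_e(m|x)$. *)

theory Defs
  imports "HOL-Analysis.Analysis"
begin

text \<open>Square complex matrices of dimension n are represented as functions
  nat => nat => complex; only the entries with indices below n matter.\<close>

type_synonym cmat = "nat \<Rightarrow> nat \<Rightarrow> complex"

definition psd :: "nat \<Rightarrow> cmat \<Rightarrow> bool" where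
  "psd n A \<longleftrightarrow> (\<forall>i<n. \<forall>j<n. A i j = cnj (A j i)) \<and>
     (\<forall>v :: nat \<Rightarrow> complex. 0 \<le> Re (\<Sum>i<n. \<Sum>j<n. cnj (v i) * A i j * v j))"

definition mtrace :: "nat \<Rightarrow> cmat \<Rightarrow> complex" where
  "mtrace n A = (\<Sum>i<n. A i i)"

definition mmult :: "nat \<Rightarrow> cmat \<Rightarrow> cmat \<Rightarrow> cmat" where
  "mmult n A B = (\<lambda>i j. \<Sum>k<n. A i k * B k j)"

definition density :: "nat \<Rightarrow> cmat \<Rightarrow> bool" where
  "density n \<rho> \<longleftrightarrow> psd n \<rho> \<and> mtrace n \<rho> = 1"

definition povm :: "nat \<Rightarrow> 'o set \<Rightarrow> ('o \<Rightarrow> cmat) \<Rightarrow> bool" where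
  "povm n I E \<longleftrightarrow> finite I \<and> (\<forall>w\<in>I. psd n (E w)) \<and>
     (\<forall>a<n. \<forall>b<n. (\<Sum>w\<in>I. E w a b) = (if a = b then 1 else 0))"

definition prob :: "nat \<Rightarrow> cmat \<Rightarrow> cmat \<Rightarrow> real" where
  "prob n \<rho> M = Re (mtrace n (mmult n \<rho> M))"

definition inputs :: "nat \<Rightarrow> (nat \<times> nat) set" where
  "inputs d = {1..d} \<times> {1..d}"

definition sel :: "nat \<Rightarrow> nat \<times> nat \<Rightarrow> nat" where
  "sel y x = (if y = 1 then fst x else snd x)"

definition S_star :: "nat \<Rightarrow> real" where
  "S_star d = (1 + 1 / sqrt (real d)) / 2"

definition DQ :: "nat \<Rightarrow> ('x set) \<Rightarrow> ('x \<Rightarrow> cmat) \<Rightarrow> real" where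
  "DQ n X \<rho> = Sup {(1 / real (card X)) * (\<Sum>x\<in>X. prob n (\<rho> x) (E x)) | E. povm n X E}"

definition quantum_protocol :: "nat \<Rightarrow> nat \<Rightarrow> (nat \<times> nat \<Rightarrow> cmat) \<Rightarrow> (nat \<Rightarrow> nat \<Rightarrow> cmat) \<Rightarrow> bool" where
  "quantum_protocol d n \<rho> M \<longleftrightarrow> 0 < n \<and> (\<forall>x\<in>inputs d. density n (\<rho> x)) \<and>
     (\<forall>y\<in>{1,2}. povm n {1..d} (M y))"

definition SQ :: "nat \<Rightarrow> nat \<Rightarrow> (nat \<times> nat \<Rightarrow> cmat) \<Rightarrow> (nat \<Rightarrow> nat \<Rightarrow> cmat) \<Rightarrow> real" where
  "SQ d n \<rho> M = (1 / (2 * real d ^ 2)) *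
     (\<Sum>x\<in>inputs d. \<Sum>y\<in>{1,2}. prob n (\<rho> x) (M y (sel y x)))"

text \<open>Classical protocol with messages m in {0..<K}: encoding pe x m = p_e(m|x),
  decoding pd y m z = p_d(z|y,m).\<close>
definition classical_protocol :: "nat \<Rightarrow> nat \<Rightarrow> (nat \<times> nat \<Rightarrow> nat \<Rightarrow> real) \<Rightarrow> (nat \<Rightarrow> nat \<Rightarrow> nat \<Rightarrow> real) \<Rightarrow> bool" where
  "classical_protocol d K pe pd \<longleftrightarrow>
     (\<forall>x\<in>inputs d. (\<forall>m<K. 0 \<le> pe x m) \<and> (\<Sum>m<K. pe x m) = 1) \<and>
     (\<forall>y\<in>{1,2}. \<forall>m<K. (\<forall>z\<in>{1..d}. 0 \<le> pd y m z) \<and> (\<Sum>z\<in>{1..d}. pd y m z) = 1)"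

definition SC :: "nat \<Rightarrow> nat \<Rightarrow> (nat \<times> nat \<Rightarrow> nat \<Rightarrow> real) \<Rightarrow> (nat \<Rightarrow> nat \<Rightarrow> nat \<Rightarrow> real) \<Rightarrow> real" where
  "SC d K pe pd = (1 / (2 * real d ^ 2)) *
     (\<Sum>x\<in>inputs d. \<Sum>y\<in>{1,2}. \<Sum>m<K. pe x m * pd y m (sel y x))"

definition DC :: "nat \<Rightarrow> nat \<Rightarrow> (nat \<times> nat \<Rightarrow> nat \<Rightarrow> real) \<Rightarrow> real" where
  "DC d K pe = (1 / real (card (inputs d))) * (\<Sum>m<K. Max ((\<lambda>x. pe x m) ` inputs d))"

end

theory Submission
  imports Defs
begin


definition proj :: "(nat \<Rightarrow> complex) \<Rightarrow> cmat" where
  "proj u = (\<lambda>i j. u i * cnj (u j))"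

definition ip :: "nat \<Rightarrow> (nat \<Rightarrow> complex) \<Rightarrow> (nat \<Rightarrow> complex) \<Rightarrow> complex" where
  "ip n u w = (\<Sum>i<n. cnj (u i) * w i)"

lemma prob_proj_gen: "prob n (proj u) E = Re (\<Sum>k<n. \<Sum>i<n. cnj (u k) * E k i * u i)"
proof -
  have "mtrace n (mmult n (proj u) E) = (\<Sum>i<n. \<Sum>k<n. u i * cnj (u k) * E k i)"
    by (simp add: mtrace_def mmult_def proj_def)
  also have "\<dots> = (\<Sum>k<n. \<Sum>i<n. cnj (u k) * E k i * u i)"
    by (subst sum.swap) (simp add: mult_ac)
  finally show ?thesis by (simp add: prob_def)
qed

lemma prob_proj: "prob n (proj u) (proj w) = (cmod (ip n w u))\<^sup>2"
proof -
  have "mtrace n (mmult n (proj u) (proj w)) = (\<Sum>i<n. \<Sum>k<n. (cnj (w i) * u i) * (cnj (u k) * w k))"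
    by (simp add: mtrace_def mmult_def proj_def mult_ac)
  also have "\<dots> = ip n w u * cnj (ip n w u)"
    by (simp add: ip_def sum_product) (simp add: mult_ac)
  finally show ?thesis by (simp add: prob_def complex_mult_cnj cmod_def)
qed

lemma psd_proj: "psd n (proj u)"
  unfolding psd_def
proof (intro conjI allI impI)
  fix v :: "nat \<Rightarrow> complex"
  have "(\<Sum>i<n. \<Sum>j<n. cnj (v i) * proj u i j * v j) = (\<Sum>i<n. \<Sum>j<n. (cnj (v i) * u i) * (cnj (u j) * v j))"
    by (simp add: proj_def mult_ac)
  also have "\<dots> = ip n v u * cnj (ip n v u)"
    by (simp add: ip_def sum_product mult_ac)
  finally show "0 \<le> Re (\<Sum>i<n. \<Sum>j<n. cnj (v i) * proj u i j * v j)"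
    by (simp add: complex_mult_cnj)
qed (simp add: proj_def)

lemma trace_proj: "mtrace n (proj u) = ip n u u"
  by (simp add: mtrace_def proj_def ip_def mult_ac)



lemma sum_delta2:
  fixes g :: "nat \<Rightarrow> complex"
  assumes "i < n" "j < n" "i \<noteq> j"
  shows "(\<Sum>l<n. g l * (if l = i then t else if l = j then w else 0)) = g i * t + g j * w"
proof -
  have "(\<Sum>l<n. g l * (if l = i then t else if l = j then w else 0)) =
        (\<Sum>l<n. (if l = i then g l * t else 0) + (if l = j then g l * w else 0))"
    by (rule sum.cong) (use assms in auto)
  also have "\<dots> = g i * t + g j * w" using assms by (simp add: sum.distrib)
  finally show ?thesis .
qed

lemma sum_delta2':
  fixes g :: "nat \<Rightarrow> complex"
  assumes "i < n" "j < n" "i \<noteq> j"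
  shows "(\<Sum>l<n. (if l = i then t else if l = j then w else 0) * g l) = t * g i + w * g j"
  using sum_delta2[OF assms, of g t w] by (simp add: mult.commute)

lemma cnj_if2: "cnj (if a then x else if b then y else 0) = (if a then cnj x else if b then cnj y else 0)"
  by simp

lemma cnj_if1: "cnj (if a then x else 0) = (if a then cnj x else 0)"
  by simp

lemma sum_delta1:
  fixes g :: "nat \<Rightarrow> complex"
  assumes "i < n"
  shows "(\<Sum>l<n. g l * (if l = i then t else 0)) = g i * t"
proof -
  have "(\<Sum>l<n. g l * (if l = i then t else 0)) = (\<Sum>l<n. (if l = i then g l * t else 0))"
    by (rule sum.cong) auto
  also have "\<dots> = g i * t" using assms by simp
  finally show ?thesis .
qed

lemma sum_delta1':
  fixes g :: "nat \<Rightarrow> complex"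
  assumes "i < n"
  shows "(\<Sum>l<n. (if l = i then t else 0) * g l) = t * g i"
  using sum_delta1[OF assms, of g t] by (simp add: mult.commute)

lemma quad2:
  fixes E :: cmat and t w :: complex
  assumes "i < n" "j < n" "i \<noteq> j"
  shows "(\<Sum>k<n. \<Sum>l<n. cnj ((\<lambda>m. if m = i then t else if m = j then w else 0) k) * E k l *
      (\<lambda>m. if m = i then t else if m = j then w else 0) l)
    = cnj t * E i i * t + cnj t * E i j * w + cnj w * E j i * t + cnj w * E j j * w"
proof -
  have "(\<Sum>k<n. \<Sum>l<n. cnj ((\<lambda>m. if m = i then t else if m = j then w else 0) k) * E k l *
      (\<lambda>m. if m = i then t else if m = j then w else 0) l)
   = (\<Sum>k<n. (if k = i then cnj t else if k = j then cnj w else 0) * (E k i * t + E k j * w))"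
  proof (rule sum.cong)
    fix k assume "k \<in> {..<n}"
    have "(\<Sum>l<n. cnj ((\<lambda>m. if m = i then t else if m = j then w else 0) k) * E k l *
      (\<lambda>m. if m = i then t else if m = j then w else 0) l) =
      cnj ((\<lambda>m. if m = i then t else if m = j then w else 0) k) * (\<Sum>l<n. E k l *
      (if l = i then t else if l = j then w else 0))"
      by (simp only: sum_distrib_left mult.assoc)
    also have "\<dots> = (if k = i then cnj t else if k = j then cnj w else 0) * (E k i * t + E k j * w)"
      by (subst sum_delta2[OF assms]) (simp only: cnj_if2)
    finally show "(\<Sum>l<n. cnj ((\<lambda>m. if m = i then t else if m = j then w else 0) k) * E k l *
      (\<lambda>m. if m = i then t else if m = j then w else 0) l) = (if k = i then cnj t else if k = j then cnj w else 0) * (E k i * t + E k j * w)" .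
  qed simp
  also have "\<dots> = cnj t * (E i i * t + E i j * w) + cnj w * (E j i * t + E j j * w)"
    by (rule sum_delta2'[OF assms])
  finally show ?thesis by (simp add: algebra_simps)
qed

lemma psd_quad: "psd n E \<Longrightarrow> 0 \<le> Re (\<Sum>i<n. \<Sum>j<n. cnj (v i) * E i j * v j)"
  unfolding psd_def by (elim conjE) (erule allE[where x=v])

lemma psd_herm: "psd n E \<Longrightarrow> i < n \<Longrightarrow> j < n \<Longrightarrow> E i j = cnj (E j i)"
  unfolding psd_def by blast

lemma psd_diag:
  assumes "psd n E" "i < n"
  shows "E i i = complex_of_real (Re (E i i))" "0 \<le> Re (E i i)"
proof -
  have h: "E i i = cnj (E i i)" using psd_herm[OF assms(1,2,2)] .
  then show "E i i = complex_of_real (Re (E i i))"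
  proof -
    have a: "Im (E i i) = Im (cnj (E i i))" using h by (rule arg_cong)
    have b: "Im (cnj (E i i)) = - Im (E i i)" by simp
    have "Im (E i i) = 0" using a b by linarith
    then show ?thesis by (simp add: complex_eq_iff)
  qed
  have "0 \<le> Re (\<Sum>k<n. \<Sum>l<n. cnj ((\<lambda>m. if m = i then 1 else 0) k) * E k l * (\<lambda>m. if m = i then 1 else 0) l)"
    by (rule psd_quad[OF assms(1)])
  also have "(\<Sum>k<n. \<Sum>l<n. cnj ((\<lambda>m. if m = i then 1 else 0) k) * E k l * (\<lambda>m. if m = i then (1::complex) else 0) l) = E i i"
    by (simp only: sum_delta1[OF assms(2)] cnj_if1 complex_cnj_one mult_1_right sum_delta1'[OF assms(2)] mult_1_left)
  finally show "0 \<le> Re (E i i)" .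
qed


lemma real_quad_bound:
  fixes a b K :: real
  assumes "0 \<le> a" "0 \<le> b" "0 \<le> K" "\<And>t. 0 \<le> a * t\<^sup>2 - 2 * t * K + K * b"
  shows "K \<le> a * b"
proof (cases "a > 0")
  case True
  have "0 \<le> a * (K / a)\<^sup>2 - 2 * (K / a) * K + K * b" by (rule assms(4))
  also have "\<dots> = K * (b - K / a)" using True by (simp add: power2_eq_square field_simps)
  finally have h: "0 \<le> K * (b - K / a)" .
  show ?thesis
  proof (cases "K = 0")
    case True then show ?thesis using assms by simp
  next
    case False
    then have "K > 0" using assms by simp
    then have "K / a \<le> b" using h by (simp add: zero_le_mult_iff)
    then show ?thesis using \<open>a > 0\<close> by (simp add: field_simps mult.commute)
  qed
next
  case False
  then have a0: "a = 0" using assms by simp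
  have "0 \<le> a * (b+1)\<^sup>2 - 2 * (b+1) * K + K * b" by (rule assms(4))
  then have "0 \<le> - K * (b + 2)" using a0 by (simp add: algebra_simps)
  then have "K \<le> 0" using assms(2) by (simp add: mult_le_0_iff)
  then show ?thesis using a0 assms by simp
qed

lemma psd_offdiag:
  assumes "psd n E" "i < n" "j < n" "i \<noteq> j"
  shows "(cmod (E i j))\<^sup>2 \<le> Re (E i i) * Re (E j j)"
proof -
  define c where "c = E i j"
  define K where "K = (cmod c)\<^sup>2"
  have hi: "E i i = complex_of_real (Re (E i i))" using psd_diag(1)[OF assms(1,2)] .
  have hj: "E j j = complex_of_real (Re (E j j))" using psd_diag(1)[OF assms(1,3)] .
  have hji: "E j i = cnj c" unfolding c_def using psd_herm[OF assms(1,3,2)] .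
  have cc: "c * cnj c = complex_of_real K" unfolding K_def by (simp add: complex_mult_cnj cmod_power2)
  have "0 \<le> Re (E i i) * t\<^sup>2 - 2 * t * K + K * Re (E j j)" for t :: real
  proof -
    have "0 \<le> Re (\<Sum>k<n. \<Sum>l<n. cnj ((\<lambda>m. if m = i then complex_of_real t else if m = j then - cnj c else 0) k) * E k l *
      (\<lambda>m. if m = i then complex_of_real t else if m = j then - cnj c else 0) l)"
      by (rule psd_quad[OF assms(1)])
    also have "\<dots> = Re (cnj (complex_of_real t) * E i i * complex_of_real t + cnj (complex_of_real t) * E i j * (- cnj c)
       + cnj (- cnj c) * E j i * complex_of_real t + cnj (- cnj c) * E j j * (- cnj c))"
      by (subst quad2[OF assms(2-4)]) (rule refl)
    also have "\<dots> = Re (complex_of_real (Re (E i i) * t\<^sup>2 - 2 * t * K + K * Re (E j j)))"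
    proof -
      have "cnj (complex_of_real t) * E i i * complex_of_real t + cnj (complex_of_real t) * E i j * (- cnj c)
       + cnj (- cnj c) * E j i * complex_of_real t + cnj (- cnj c) * E j j * (- cnj c)
        = complex_of_real (Re (E i i)) * complex_of_real t ^2 - 2 * complex_of_real t * (c * cnj c)
          + (c * cnj c) * complex_of_real (Re (E j j))"
        apply (subst hi, subst hj, subst hji)
        by (simp add: c_def power2_eq_square algebra_simps)
      then show ?thesis by (simp add: cc)
    qed
    finally show ?thesis by simp
  qed
  then have "K \<le> Re (E i i) * Re (E j j)"
    by (intro real_quad_bound psd_diag(2)[OF assms(1,2)] psd_diag(2)[OF assms(1,3)]) (auto simp: K_def)
  then show ?thesis by (simp add: K_def c_def)
qed


lemma psd_entry_bound:
  assumes "psd n E" "i < n" "j < n"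
  shows "cmod (E i j) \<le> sqrt (Re (E i i)) * sqrt (Re (E j j))"
proof (cases "i = j")
  case True
  have "cmod (E i i) = Re (E i i)" using psd_diag[OF assms(1,2)]
    by (metis abs_of_nonneg norm_of_real)
  then show ?thesis using True psd_diag(2)[OF assms(1,2)] by simp
next
  case False
  have "(cmod (E i j))\<^sup>2 \<le> Re (E i i) * Re (E j j)" by (rule psd_offdiag[OF assms False])
  then have "sqrt ((cmod (E i j))\<^sup>2) \<le> sqrt (Re (E i i) * Re (E j j))" by (rule real_sqrt_le_mono)
  then show ?thesis by (simp add: real_sqrt_mult)
qed

lemma Re_ip_self: "Re (ip n u u) = (\<Sum>k<n. (cmod (u k))\<^sup>2)"
  by (simp add: ip_def Re_sum cmod_power2) (simp add: power2_eq_square)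

lemma quad_le_trace:
  assumes "psd n E"
  shows "Re (\<Sum>k<n. \<Sum>i<n. cnj (u k) * E k i * u i) \<le> Re (mtrace n E) * Re (ip n u u)"
proof -
  define a where "a k = sqrt (Re (E k k))" for k
  have "Re (\<Sum>k<n. \<Sum>i<n. cnj (u k) * E k i * u i) \<le> cmod (\<Sum>k<n. \<Sum>i<n. cnj (u k) * E k i * u i)"
    by (rule complex_Re_le_cmod)
  also have "\<dots> \<le> (\<Sum>k<n. cmod (\<Sum>i<n. cnj (u k) * E k i * u i))" by (rule norm_sum)
  also have "\<dots> \<le> (\<Sum>k<n. \<Sum>i<n. cmod (cnj (u k) * E k i * u i))"
    by (intro sum_mono norm_sum)
  also have "\<dots> \<le> (\<Sum>k<n. \<Sum>i<n. (cmod (u k) * a k) * (cmod (u i) * a i))"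
  proof (intro sum_mono)
    fix k i assume "k \<in> {..<n}" "i \<in> {..<n}"
    then have "cmod (E k i) \<le> a k * a i" unfolding a_def by (intro psd_entry_bound[OF assms]) auto
    then have "cmod (u k) * cmod (E k i) * cmod (u i) \<le> cmod (u k) * (a k * a i) * cmod (u i)"
      by (intro mult_right_mono mult_left_mono) auto
    then show "cmod (cnj (u k) * E k i * u i) \<le> (cmod (u k) * a k) * (cmod (u i) * a i)"
      by (simp add: norm_mult mult_ac)
  qed
  also have "\<dots> = (\<Sum>k<n. cmod (u k) * a k)\<^sup>2"
    by (simp add: power2_eq_square sum_product)
  also have "\<dots> \<le> (\<Sum>k<n. (cmod (u k))\<^sup>2) * (\<Sum>k<n. (a k)\<^sup>2)"
    by (rule Cauchy_Schwarz_ineq_sum)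
  also have "(\<Sum>k<n. (a k)\<^sup>2) = Re (mtrace n E)"
    unfolding a_def mtrace_def Re_sum using psd_diag(2)[OF assms] by (intro sum.cong) auto
  finally show ?thesis by (simp add: Re_ip_self mult.commute)
qed



lemma card_inputs: "card (inputs d) = d * d"
  by (simp add: inputs_def card_cartesian_product)

lemma finite_inputs: "finite (inputs d)"
  by (simp add: inputs_def)

lemma exists_max:
  fixes r :: "nat \<Rightarrow> real"
  assumes "(1::nat) \<le> d"
  obtains a0 where "a0 \<in> {1..d}" "\<And>a. a \<in> {1..d} \<Longrightarrow> r a \<le> r a0"
proof -
  have ne: "r ` {1..d} \<noteq> {}" using assms by auto
  have "Max (r ` {1..d}) \<in> r ` {1..d}" using ne by (intro Max_in) auto
  then obtain a0 where a0: "a0 \<in> {1..d}" "r a0 = Max (r ` {1..d})" by auto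
  have "\<And>a. a \<in> {1..d} \<Longrightarrow> r a \<le> r a0" unfolding a0(2) by (intro Max_ge) auto
  then show ?thesis using a0 that by blast
qed

lemma marginal_bound:
  fixes q :: "nat \<times> nat \<Rightarrow> real" and p :: "nat \<Rightarrow> real" and f :: "nat \<times> nat \<Rightarrow> nat"
  assumes fin: "finite I"
    and q0: "\<And>x. x \<in> I \<Longrightarrow> 0 \<le> q x"
    and fI: "\<And>x. x \<in> I \<Longrightarrow> f x \<in> {1..d}"
    and p0: "\<And>a. a \<in> {1..d} \<Longrightarrow> 0 \<le> p a" and p1: "(\<Sum>a\<in>{1..d}. p a) = 1"
    and d1: "(1::nat) \<le> d"
  obtains a0 where "a0 \<in> {1..d}"
    "(\<Sum>x\<in>I. q x * p (f x)) \<le> (\<Sum>x\<in>I. q x * (if f x = a0 then 1 else 0))"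
proof -
  define r where "r a = (\<Sum>x\<in>I. q x * (if f x = a then 1 else 0))" for a
  obtain a0 where a0: "a0 \<in> {1..d}" "\<And>a. a \<in> {1..d} \<Longrightarrow> r a \<le> r a0"
    using exists_max[OF d1] by blast
  have "(\<Sum>x\<in>I. q x * p (f x)) = (\<Sum>x\<in>I. \<Sum>a\<in>{1..d}. p a * (q x * (if f x = a then 1 else 0)))"
  proof (rule sum.cong)
    fix x assume "x \<in> I"
    then have "f x \<in> {1..d}" by (rule fI)
    then show "q x * p (f x) = (\<Sum>a\<in>{1..d}. p a * (q x * (if f x = a then 1 else 0)))"
      by (simp add: if_distrib cong: if_cong)
  qed simp
  also have "\<dots> = (\<Sum>a\<in>{1..d}. p a * r a)"
    unfolding r_def by (subst sum.swap) (simp add: sum_distrib_left)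
  also have "\<dots> \<le> (\<Sum>a\<in>{1..d}. p a * r a0)"
    by (intro sum_mono mult_left_mono a0(2) p0)
  also have "\<dots> = r a0" using p1 by (simp add: sum_distrib_right[symmetric])
  finally show ?thesis using a0(1) that unfolding r_def by blast
qed

lemma per_message:
  fixes q :: "nat \<times> nat \<Rightarrow> real" and p1 p2 :: "nat \<Rightarrow> real"
  assumes q0: "\<And>x. x \<in> inputs d \<Longrightarrow> 0 \<le> q x"
    and p10: "\<And>a. a \<in> {1..d} \<Longrightarrow> 0 \<le> p1 a" and p11: "(\<Sum>a\<in>{1..d}. p1 a) = 1"
    and p20: "\<And>a. a \<in> {1..d} \<Longrightarrow> 0 \<le> p2 a" and p21: "(\<Sum>a\<in>{1..d}. p2 a) = 1"
    and d1: "(1::nat) \<le> d"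
  shows "(\<Sum>x\<in>inputs d. q x * p1 (fst x) + q x * p2 (snd x)) \<le> (\<Sum>x\<in>inputs d. q x) + Max (q ` inputs d)"
proof -
  have fst_in: "\<And>x. x \<in> inputs d \<Longrightarrow> fst x \<in> {1..d}" and snd_in: "\<And>x. x \<in> inputs d \<Longrightarrow> snd x \<in> {1..d}"
    by (auto simp: inputs_def)
  obtain a0 where a0: "a0 \<in> {1..d}"
    "(\<Sum>x\<in>inputs d. q x * p1 (fst x)) \<le> (\<Sum>x\<in>inputs d. q x * (if fst x = a0 then 1 else 0))"
    using marginal_bound[of "inputs d" q fst d p1, OF finite_inputs q0 fst_in p10 p11 d1] by blast
  obtain b0 where b0: "b0 \<in> {1..d}"
    "(\<Sum>x\<in>inputs d. q x * p2 (snd x)) \<le> (\<Sum>x\<in>inputs d. q x * (if snd x = b0 then 1 else 0))"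
    using marginal_bound[of "inputs d" q snd d p2, OF finite_inputs q0 snd_in p20 p21 d1] by blast
  have ab: "(a0, b0) \<in> inputs d" using a0(1) b0(1) by (simp add: inputs_def)
  have "(\<Sum>x\<in>inputs d. q x * p1 (fst x) + q x * p2 (snd x))
      \<le> (\<Sum>x\<in>inputs d. q x * ((if fst x = a0 then 1 else 0) + (if snd x = b0 then 1 else 0)))"
    using a0(2) b0(2) by (simp add: sum.distrib distrib_left)
  also have "\<dots> \<le> (\<Sum>x\<in>inputs d. q x * (1 + (if x = (a0, b0) then 1 else 0)))"
    by (intro sum_mono mult_left_mono q0) auto
  also have "\<dots> = (\<Sum>x\<in>inputs d. q x) + q (a0, b0)"
  proof -
    have "(\<Sum>x\<in>inputs d. q x * (1 + (if x = (a0, b0) then 1 else 0)))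
       = (\<Sum>x\<in>inputs d. q x + (if x = (a0, b0) then q x else 0))" by (intro sum.cong) auto
    also have "\<dots> = (\<Sum>x\<in>inputs d. q x) + q (a0, b0)"
      using ab by (simp add: sum.distrib finite_inputs)
    finally show ?thesis .
  qed
  also have "\<dots> \<le> (\<Sum>x\<in>inputs d. q x) + Max (q ` inputs d)"
    using ab finite_inputs by simp
  finally show ?thesis .
qed

lemma classical_bound:
  assumes cp: "classical_protocol d K pe pd" and d1: "(1::nat) \<le> d"
  shows "2 * SC d K pe pd \<le> 1 + DC d K pe"
proof -
  have pe0: "\<And>x m. x \<in> inputs d \<Longrightarrow> m < K \<Longrightarrow> 0 \<le> pe x m"
    and pe1: "\<And>x. x \<in> inputs d \<Longrightarrow> (\<Sum>m<K. pe x m) = 1"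
    and pd0: "\<And>y m z. y \<in> {1,2} \<Longrightarrow> m < K \<Longrightarrow> z \<in> {1..d} \<Longrightarrow> 0 \<le> pd y m z"
    and pd1: "\<And>y m. y \<in> {1,2} \<Longrightarrow> m < K \<Longrightarrow> (\<Sum>z\<in>{1..d}. pd y m z) = 1"
    using cp unfolding classical_protocol_def by blast+
  have dpos: "0 < real d" using d1 by simp
  have "(\<Sum>x\<in>inputs d. \<Sum>y\<in>{1,2}. \<Sum>m<K. pe x m * pd y m (sel y x))
      = (\<Sum>m<K. \<Sum>x\<in>inputs d. pe x m * pd 1 m (fst x) + pe x m * pd 2 m (snd x))"
  proof -
    have "(\<Sum>x\<in>inputs d. \<Sum>y\<in>{1,2}. \<Sum>m<K. pe x m * pd y m (sel y x))
      = (\<Sum>x\<in>inputs d. \<Sum>m<K. pe x m * pd 1 m (fst x) + pe x m * pd 2 m (snd x))"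
      by (simp add: sel_def sum.distrib)
    also have "\<dots> = (\<Sum>m<K. \<Sum>x\<in>inputs d. pe x m * pd 1 m (fst x) + pe x m * pd 2 m (snd x))"
      by (rule sum.swap)
    finally show ?thesis .
  qed
  also have "\<dots> \<le> (\<Sum>m<K. (\<Sum>x\<in>inputs d. pe x m) + Max ((\<lambda>x. pe x m) ` inputs d))"
  proof (rule sum_mono)
    fix m assume m: "m \<in> {..<K}"
    show "(\<Sum>x\<in>inputs d. pe x m * pd 1 m (fst x) + pe x m * pd 2 m (snd x))
        \<le> (\<Sum>x\<in>inputs d. pe x m) + Max ((\<lambda>x. pe x m) ` inputs d)"
      using m by (intro per_message[where q = "\<lambda>x. pe x m", OF _ _ _ _ _ d1] pe0 pd0 pd1) auto
  qed
  also have "\<dots> = real (d * d) + (\<Sum>m<K. Max ((\<lambda>x. pe x m) ` inputs d))"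
    by (simp add: sum.distrib) (subst sum.swap, simp add: pe1 card_inputs)
  finally have main: "(\<Sum>x\<in>inputs d. \<Sum>y\<in>{1,2}. \<Sum>m<K. pe x m * pd y m (sel y x))
     \<le> real (d * d) + (\<Sum>m<K. Max ((\<lambda>x. pe x m) ` inputs d))" .
  have "2 * SC d K pe pd = (\<Sum>x\<in>inputs d. \<Sum>y\<in>{1,2}. \<Sum>m<K. pe x m * pd y m (sel y x)) / (real d * real d)"
    unfolding SC_def by (simp add: power2_eq_square field_simps)
  also have "\<dots> \<le> (real (d * d) + (\<Sum>m<K. Max ((\<lambda>x. pe x m) ` inputs d))) / (real d * real d)"
    using main dpos by (intro divide_right_mono) auto
  also have "\<dots> = 1 + DC d K pe"
    unfolding DC_def card_inputs using dpos by (simp add: field_simps)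
  finally show ?thesis .
qed



lemma root_sum_zero:
  assumes "a < d" "a' < d" "a \<noteq> a'"
  shows "(\<Sum>z<d. cis (2 * pi * real z * (real a - real a') / real d)) = 0"
proof -
  define th where "th = 2 * pi * (real a - real a') / real d"
  define w where "w = cis th"
  have d0: "real d > 0" using assms by simp
  have terms: "cis (2 * pi * real z * (real a - real a') / real d) = w ^ z" for z
    unfolding w_def th_def Complex.DeMoivre by (simp add: field_simps)
  have wd: "w ^ d = 1"
  proof -
    have "real d * th = 2 * pi * real_of_int (int a - int a')"
      unfolding th_def using d0 by (simp add: field_simps)
    then have "w ^ d = cis (2 * pi * real_of_int (int a - int a'))"
      unfolding w_def Complex.DeMoivre by simp
    also have "\<dots> = 1" by (rule cis_multiple_2pi) simp
    finally show ?thesis .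
  qed
  have w1: "w \<noteq> 1"
  proof
    assume "w = 1"
    then have "cos th = 1" unfolding w_def by (metis Re_complex_of_real cis.sel(1) of_real_1)
    then obtain k :: int where k: "th = real_of_int k * 2 * pi" by (auto simp: cos_one_2pi_int)
    then have "pi * (2 * (real a - real a' - real_of_int k * real d)) = 0" unfolding th_def using d0
      by (simp add: field_simps)
    then have "real a - real a' = real_of_int k * real d" using pi_gt_zero by simp
    then have e: "int a - int a' = k * int d"
      by (metis of_int_eq_iff of_int_diff of_int_mult of_int_of_nat_eq)
    show False
    proof (cases "k = 0")
      case True then show False using e assms by simp
    next
      case False
      then have "\<bar>k * int d\<bar> \<ge> int d" by (simp add: abs_mult mult_le_cancel_right1) linarith
      moreover have "\<bar>int a - int a'\<bar> < int d" using assms by simp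
      ultimately show False using e by simp
    qed
  qed
  have "(\<Sum>z<d. cis (2 * pi * real z * (real a - real a') / real d)) = (\<Sum>z<d. w ^ z)"
    using terms by simp
  also have "\<dots> = 0" using w1 wd by (simp add: sum_gp_strict)
  finally show ?thesis .
qed


definition ev :: "nat \<Rightarrow> nat \<Rightarrow> complex" where
  "ev a = (\<lambda>k. if k = a then 1 else 0)"

definition fv :: "nat \<Rightarrow> nat \<Rightarrow> nat \<Rightarrow> nat \<Rightarrow> complex" where
  "fv d a b = (\<lambda>k. cis (2 * pi * real b * (real k - real a) / real d) / complex_of_real (sqrt (real d)))"

definition cc :: "nat \<Rightarrow> real" where
  "cc d = 1 / sqrt (2 + 2 / sqrt (real d))"

definition psi :: "nat \<Rightarrow> nat \<Rightarrow> nat \<Rightarrow> nat \<Rightarrow> complex" where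
  "psi d a b = (\<lambda>k. complex_of_real (cc d) * (ev a k + fv d a b k))"

lemma ev_same: "ev a a = 1"
  by (simp add: ev_def)

lemma ip_add_right: "ip n u (\<lambda>k. v k + w k) = ip n u v + ip n u w"
  by (simp add: ip_def distrib_left sum.distrib)

lemma ip_add_left: "ip n (\<lambda>k. v k + w k) u = ip n v u + ip n w u"
  by (simp add: ip_def distrib_right sum.distrib)

lemma ip_scale_right: "ip n u (\<lambda>k. c * w k) = c * ip n u w"
  by (simp add: ip_def sum_distrib_left mult_ac)

lemma ip_scale_left: "ip n (\<lambda>k. c * w k) u = cnj c * ip n w u"
  by (simp add: ip_def sum_distrib_left mult_ac)

lemma ip_ev_left: assumes "a < n" shows "ip n (ev a) w = w a"
  unfolding ip_def ev_def by (simp only: cnj_if1 complex_cnj_one sum_delta1'[OF assms] mult_1_left)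

lemma ip_ev_right: assumes "a < n" shows "ip n w (ev a) = cnj (w a)"
  unfolding ip_def ev_def by (simp only: sum_delta1[OF assms] mult_1_right)

lemma fv_aa: "fv d a b a = complex_of_real (1 / sqrt (real d))"
  by (simp add: fv_def)

lemma cis_cnj_mult: "cnj (cis t) * cis t = 1"
  by (simp add: cis_cnj cis_mult)

lemma ip_fv_fv:
  assumes "0 < d"
  shows "ip d (fv d a b) (fv d a b) = 1"
proof -
  have "ip d (fv d a b) (fv d a b) = (\<Sum>k<d. complex_of_real (1 / real d))"
    unfolding ip_def
  proof (rule sum.cong)
    fix k
    let ?t = "2 * pi * real b * (real k - real a) / real d"
    have "cnj (fv d a b k) * fv d a b k = (cnj (cis ?t) * cis ?t) / (complex_of_real (sqrt (real d)) * complex_of_real (sqrt (real d)))"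
      by (simp add: fv_def)
    also have "\<dots> = complex_of_real (1 / real d)"
      unfolding cis_cnj_mult of_real_mult[symmetric] using assms by simp
    finally show "cnj (fv d a b k) * fv d a b k = complex_of_real (1 / real d)" .
  qed simp
  also have "\<dots> = 1" using assms by simp
  finally show ?thesis .
qed

lemma ip_F_fv:
  assumes "0 < d"
  shows "ip d (fv d 0 b) (fv d a b) = cis (- (2 * pi * real b * real a / real d))"
proof -
  have "ip d (fv d 0 b) (fv d a b) = (\<Sum>k<d. cis (- (2 * pi * real b * real a / real d)) / complex_of_real (real d))"
    unfolding ip_def
  proof (rule sum.cong)
    fix k
    have "cnj (fv d 0 b k) * fv d a b k = (cnj (cis (2 * pi * real b * real k / real d)) * cis (2 * pi * real b * (real k - real a) / real d))
         / (complex_of_real (sqrt (real d)) * complex_of_real (sqrt (real d)))"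
      by (simp add: fv_def)
    also have "cnj (cis (2 * pi * real b * real k / real d)) * cis (2 * pi * real b * (real k - real a) / real d)
       = cis (- (2 * pi * real b * real a / real d))"
      unfolding cis_cnj cis_mult using assms by (intro arg_cong[where f = cis]) (simp add: field_simps)
    also have "complex_of_real (sqrt (real d)) * complex_of_real (sqrt (real d)) = complex_of_real (real d)"
      unfolding of_real_mult[symmetric] by simp
    finally show "cnj (fv d 0 b k) * fv d a b k = cis (- (2 * pi * real b * real a / real d)) / complex_of_real (real d)" .
  qed simp
  also have "\<dots> = cis (- (2 * pi * real b * real a / real d))" using assms by simp
  finally show ?thesis .
qed


lemma cc_facts:
  assumes "0 < d"
  shows "(cc d)\<^sup>2 * (2 + 2 / sqrt (real d)) = 1"
    "(cc d)\<^sup>2 * (1 + 1 / sqrt (real d))\<^sup>2 = S_star d"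
proof -
  define s where "s = sqrt (real d)"
  have s0: "s > 0" using assms by (simp add: s_def)
  have pos: "2 + 2 / s > 0" using s0 by (simp add: add_pos_pos)
  have c2: "(cc d)\<^sup>2 = 1 / (2 + 2 / s)"
    unfolding cc_def s_def[symmetric] using pos by (simp add: power_divide)
  show "(cc d)\<^sup>2 * (2 + 2 / sqrt (real d)) = 1"
    unfolding s_def[symmetric] c2 using pos by simp
  show "(cc d)\<^sup>2 * (1 + 1 / sqrt (real d))\<^sup>2 = S_star d"
  proof -
    define u where "u = 1 + 1 / s"
    have u0: "u > 0" using s0 by (simp add: u_def add_pos_pos)
    have "2 + 2 / s = 2 * u" by (simp add: u_def)
    then have "(cc d)\<^sup>2 * (1 + 1 / s)\<^sup>2 = u / 2" unfolding c2 u_def[symmetric] using u0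
      by (simp add: power2_eq_square)
    then show ?thesis unfolding s_def[symmetric] S_star_def u_def by simp
  qed
qed

lemma ip_psi_psi:
  assumes "a < d"
  shows "ip d (psi d a b) (psi d a b) = 1"
proof -
  have d0: "0 < d" using assms by simp
  have "ip d (psi d a b) (psi d a b) = cnj (complex_of_real (cc d)) * (complex_of_real (cc d) *
     (ip d (ev a) (ev a) + ip d (ev a) (fv d a b) + (ip d (fv d a b) (ev a) + ip d (fv d a b) (fv d a b))))"
    unfolding psi_def ip_scale_left ip_scale_right ip_add_left ip_add_right by simp
  also have "\<dots> = complex_of_real ((cc d)\<^sup>2 * (2 + 2 / sqrt (real d)))"
    using assms d0 by (simp add: ip_ev_left ip_ev_right ip_fv_fv fv_aa ev_same power2_eq_square field_simps)
  also have "\<dots> = 1" using cc_facts(1)[OF d0] by simp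
  finally show ?thesis .
qed

lemma ip_ev_psi:
  assumes "a < d"
  shows "(cmod (ip d (ev a) (psi d a b)))\<^sup>2 = S_star d"
proof -
  have d0: "0 < d" using assms by simp
  have "ip d (ev a) (psi d a b) = complex_of_real (cc d * (1 + 1 / sqrt (real d)))"
    unfolding psi_def ip_scale_right ip_add_right using assms
    by (simp add: ip_ev_left fv_aa ev_same)
  then have "(cmod (ip d (ev a) (psi d a b)))\<^sup>2 = (cc d * (1 + 1 / sqrt (real d)))\<^sup>2"
    by (simp only: norm_of_real power2_abs)
  also have "\<dots> = S_star d" using cc_facts(2)[OF d0] by (simp add: power_mult_distrib)
  finally show ?thesis .
qed

lemma ip_F_psi:
  assumes "a < d"
  shows "(cmod (ip d (fv d 0 b) (psi d a b)))\<^sup>2 = S_star d"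
proof -
  have d0: "0 < d" using assms by simp
  let ?t = "2 * pi * real b * real a / real d"
  have Fa: "cnj (fv d 0 b a) = cis (- ?t) * complex_of_real (1 / sqrt (real d))"
    by (simp add: fv_def cis_cnj)
  have "ip d (fv d 0 b) (psi d a b) = complex_of_real (cc d) * (cnj (fv d 0 b a) + cis (- ?t))"
    unfolding psi_def ip_scale_right ip_add_right using assms d0
    by (simp add: ip_ev_right ip_F_fv)
  also have "\<dots> = cis (- ?t) * complex_of_real (cc d * (1 + 1 / sqrt (real d)))"
    unfolding Fa by (simp add: algebra_simps)
  finally have "cmod (ip d (fv d 0 b) (psi d a b)) = \<bar>cc d * (1 + 1 / sqrt (real d))\<bar>"
    by (simp only: norm_mult norm_cis mult_1_left norm_of_real)
  then have "(cmod (ip d (fv d 0 b) (psi d a b)))\<^sup>2 = (cc d * (1 + 1 / sqrt (real d)))\<^sup>2"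
    by simp
  also have "\<dots> = S_star d" using cc_facts(2)[OF d0] by (simp add: power_mult_distrib)
  finally show ?thesis .
qed



definition rho :: "nat \<Rightarrow> nat \<times> nat \<Rightarrow> cmat" where
  "rho d x = proj (psi d (fst x - 1) (snd x - 1))"

definition Mq :: "nat \<Rightarrow> nat \<Rightarrow> nat \<Rightarrow> cmat" where
  "Mq d y z = (if y = 1 then proj (ev (z - 1)) else proj (fv d 0 (z - 1)))"

lemma inputs_bounds: "x \<in> inputs d \<Longrightarrow> fst x - 1 < d \<and> snd x - 1 < d \<and> 1 \<le> fst x \<and> 1 \<le> snd x"
  by (auto simp: inputs_def)

lemma sum_shift1: "(\<Sum>z\<in>{1..d::nat}. g (z - 1)) = (\<Sum>z<d. (g z :: complex))"
  using sum.atLeast1_atMost_eq[of "\<lambda>z. g (z - 1)" d] by simp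

lemma povm1: "povm d {1..d} (Mq d 1)"
  unfolding povm_def
proof (intro conjI ballI allI impI)
  fix a b assume ab: "a < d" "b < d"
  have "(\<Sum>w\<in>{1..d}. Mq d 1 w a b) = (\<Sum>z<d. proj (ev z) a b)"
    unfolding Mq_def using sum_shift1[of "\<lambda>z. proj (ev z) a b" d] by simp
  also have "\<dots> = (\<Sum>z<d. if z = a then (if a = b then 1 else 0) else 0)"
    by (rule sum.cong) (auto simp: proj_def ev_def)
  also have "\<dots> = (if a = b then 1 else 0)" using ab by simp
  finally show "(\<Sum>w\<in>{1..d}. Mq d 1 w a b) = (if a = b then 1 else 0)" .
qed (auto simp: Mq_def psd_proj)

lemma povm2:
  assumes "0 < d"
  shows "povm d {1..d} (Mq d 2)"
  unfolding povm_def
proof (intro conjI ballI allI impI)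
  fix a b assume ab: "a < d" "b < d"
  have "(\<Sum>w\<in>{1..d}. Mq d 2 w a b) = (\<Sum>z<d. proj (fv d 0 z) a b)"
    unfolding Mq_def using sum_shift1[of "\<lambda>z. proj (fv d 0 z) a b" d] by simp
  also have "\<dots> = (\<Sum>z<d. cis (2 * pi * real z * (real a - real b) / real d) / complex_of_real (real d))"
  proof (rule sum.cong)
    fix z
    have "proj (fv d 0 z) a b = (cis (2 * pi * real z * real a / real d) * cnj (cis (2 * pi * real z * real b / real d)))
       / (complex_of_real (sqrt (real d)) * complex_of_real (sqrt (real d)))"
      by (simp add: proj_def fv_def)
    also have "cis (2 * pi * real z * real a / real d) * cnj (cis (2 * pi * real z * real b / real d))
       = cis (2 * pi * real z * (real a - real b) / real d)"
      unfolding cis_cnj cis_mult using assms by (intro arg_cong[where f = cis]) (simp add: field_simps)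
    also have "complex_of_real (sqrt (real d)) * complex_of_real (sqrt (real d)) = complex_of_real (real d)"
      unfolding of_real_mult[symmetric] by simp
    finally show "proj (fv d 0 z) a b = cis (2 * pi * real z * (real a - real b) / real d) / complex_of_real (real d)" .
  qed simp
  also have "\<dots> = (\<Sum>z<d. cis (2 * pi * real z * (real a - real b) / real d)) / complex_of_real (real d)"
    by (simp add: sum_divide_distrib)
  also have "\<dots> = (if a = b then 1 else 0)"
  proof (cases "a = b")
    case True then show ?thesis using assms by simp
  next
    case False then show ?thesis using root_sum_zero[OF ab False] by simp
  qed
  finally show "(\<Sum>w\<in>{1..d}. Mq d 2 w a b) = (if a = b then 1 else 0)" .
qed (auto simp: Mq_def psd_proj)

lemma qp: assumes "2 \<le> d" shows "quantum_protocol d d (rho d) (Mq d)"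
  unfolding quantum_protocol_def
proof (intro conjI ballI)
  show "0 < d" using assms by simp
  fix x assume x: "x \<in> inputs d"
  show "density d (rho d x)"
    unfolding density_def rho_def using inputs_bounds[OF x]
    by (simp add: psd_proj trace_proj ip_psi_psi)
next
  fix y :: nat assume "y \<in> {1,2}"
  then show "povm d {1..d} (Mq d y)" using povm1 povm2 assms by auto
qed

lemma SQ_val: assumes "2 \<le> d" shows "SQ d d (rho d) (Mq d) = S_star d"
proof -
  have "(\<Sum>x\<in>inputs d. \<Sum>y\<in>{1,2}. prob d (rho d x) (Mq d y (sel y x))) = (\<Sum>x\<in>inputs d. 2 * S_star d)"
  proof (rule sum.cong)
    fix x assume x: "x \<in> inputs d"
    have p1: "prob d (rho d x) (Mq d 1 (sel 1 x)) = S_star d"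
      unfolding rho_def Mq_def sel_def using inputs_bounds[OF x]
      by (simp add: prob_proj ip_ev_psi)
    have p2: "prob d (rho d x) (Mq d 2 (sel 2 x)) = S_star d"
      unfolding rho_def Mq_def sel_def using inputs_bounds[OF x]
      by (simp add: prob_proj ip_F_psi)
    show "(\<Sum>y\<in>{1,2}. prob d (rho d x) (Mq d y (sel y x))) = 2 * S_star d"
      using p1 p2 by simp
  qed simp
  also have "\<dots> = real (d * d) * (2 * S_star d)" by (simp add: card_inputs)
  finally show ?thesis unfolding SQ_def using assms by (simp add: power2_eq_square)
qed


lemma psd_scalar:
  assumes "0 \<le> c"
  shows "psd n (\<lambda>i j. if i = j then complex_of_real c else 0)"
  unfolding psd_def
proof (intro conjI allI impI)
  fix v :: "nat \<Rightarrow> complex"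
  have "(\<Sum>i<n. \<Sum>j<n. cnj (v i) * (if i = j then complex_of_real c else 0) * v j)
      = (\<Sum>i<n. cnj (v i) * complex_of_real c * v i)"
  proof (rule sum.cong)
    fix i assume i: "i \<in> {..<n}"
    have "(\<Sum>j<n. cnj (v i) * (if i = j then complex_of_real c else 0) * v j)
        = (\<Sum>j<n. if j = i then cnj (v i) * complex_of_real c * v j else 0)"
      by (rule sum.cong) auto
    also have "\<dots> = cnj (v i) * complex_of_real c * v i" using i by simp
    finally show "(\<Sum>j<n. cnj (v i) * (if i = j then complex_of_real c else 0) * v j) = cnj (v i) * complex_of_real c * v i" .
  qed simp
  also have "\<dots> = complex_of_real c * ip n v v" by (simp add: ip_def sum_distrib_left mult_ac)
  finally show "0 \<le> Re (\<Sum>i<n. \<Sum>j<n. cnj (v i) * (if i = j then complex_of_real c else 0) * v j)"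
    using assms by (simp add: Re_ip_self[unfolded ip_def] ip_def sum_nonneg)
qed auto

lemma DQ_bounds:
  assumes "2 \<le> d"
  shows "0 < DQ d (inputs d) (rho d)" "DQ d (inputs d) (rho d) \<le> 1 / real d"
proof -
  define S where "S = {(1 / real (card (inputs d))) * (\<Sum>x\<in>inputs d. prob d (rho d x) (E x)) | E. povm d (inputs d) E}"
  have d0: "0 < real d" using assms by simp
  have ub: "s \<le> 1 / real d" if "s \<in> S" for s
  proof -
    obtain E where E: "povm d (inputs d) E" and s: "s = (1 / real (card (inputs d))) * (\<Sum>x\<in>inputs d. prob d (rho d x) (E x))"
      using \<open>s \<in> S\<close> unfolding S_def by blast
    have "(\<Sum>x\<in>inputs d. prob d (rho d x) (E x)) \<le> (\<Sum>x\<in>inputs d. Re (mtrace d (E x)))"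
    proof (rule sum_mono)
      fix x assume x: "x \<in> inputs d"
      have psdE: "psd d (E x)" using E x unfolding povm_def by blast
      have "prob d (rho d x) (E x) \<le> Re (mtrace d (E x)) * Re (ip d (psi d (fst x - 1) (snd x - 1)) (psi d (fst x - 1) (snd x - 1)))"
        unfolding rho_def prob_proj_gen by (rule quad_le_trace[OF psdE])
      then show "prob d (rho d x) (E x) \<le> Re (mtrace d (E x))"
        using inputs_bounds[OF x] by (simp add: ip_psi_psi)
    qed
    also have "\<dots> = Re (\<Sum>i<d. \<Sum>x\<in>inputs d. E x i i)"
      unfolding mtrace_def Re_sum by (subst sum.swap) simp
    also have "\<dots> = real d"
      using E unfolding povm_def by simp
    finally have "(\<Sum>x\<in>inputs d. prob d (rho d x) (E x)) \<le> real d" .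
    then have "s \<le> (1 / (real d * real d)) * real d" unfolding s card_inputs
      using d0 by (simp only: of_nat_mult) (intro mult_left_mono, auto)
    also have "\<dots> = 1 / real d" using d0 by simp
    finally show ?thesis .
  qed
  define E0 where "E0 = (\<lambda>x::nat\<times>nat. \<lambda>i j::nat. if i = j then complex_of_real (1 / (real d * real d)) else 0)"
  have povmE0: "povm d (inputs d) E0"
    unfolding povm_def E0_def using d0
    by (auto simp: finite_inputs psd_scalar card_inputs)
  have pE0: "prob d (rho d x) (E0 x) = 1 / (real d * real d)" if x: "x \<in> inputs d" for x
  proof -
    have "prob d (rho d x) (E0 x) = Re (mtrace d (rho d x)) / (real d * real d)"
      unfolding prob_def mtrace_def mmult_def E0_def
      by (simp add: if_distrib Re_sum sum_divide_distrib cong: if_cong)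
    also have "\<dots> = 1 / (real d * real d)"
      unfolding rho_def trace_proj using inputs_bounds[OF x] by (simp add: ip_psi_psi)
    finally show ?thesis .
  qed
  have s0: "1 / (real d * real d) \<in> S"
  proof -
    have "(1 / real (card (inputs d))) * (\<Sum>x\<in>inputs d. prob d (rho d x) (E0 x)) = 1 / (real d * real d)"
      using d0 by (simp add: pE0 card_inputs)
    then show ?thesis unfolding S_def using povmE0 by force
  qed
  have bdd: "bdd_above S" using ub by (intro bdd_aboveI) 
  have "1 / (real d * real d) \<le> Sup S" by (rule cSup_upper[OF s0 bdd])
  then show "0 < DQ d (inputs d) (rho d)" unfolding DQ_def S_def[symmetric] using d0
    by (smt (verit) divide_pos_pos mult_pos_pos)
  show "DQ d (inputs d) (rho d) \<le> 1 / real d" unfolding DQ_def S_def[symmetric]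
    using s0 ub by (intro cSup_least) auto
qed


theorem theorem2:
  fixes d :: nat
  assumes "d \<ge> 2"
  shows "\<exists>n \<rho> M. quantum_protocol d n \<rho> M \<and> SQ d n \<rho> M = S_star d \<and>
     (\<forall>K pe pd. classical_protocol d K pe pd \<and> SC d K pe pd \<ge> S_star d \<longrightarrow>
        DC d K pe / DQ n (inputs d) \<rho> \<ge> sqrt (real d))"
proof (intro exI conjI allI impI)
  show "quantum_protocol d d (rho d) (Mq d)" by (rule qp[OF assms])
  show "SQ d d (rho d) (Mq d) = S_star d" by (rule SQ_val[OF assms])
  fix K pe pd
  assume h: "classical_protocol d K pe pd \<and> S_star d \<le> SC d K pe pd"
  have d1: "(1::nat) \<le> d" using assms by simp
  have d0: "0 < real d" using assms by simp
  have sq0: "0 < sqrt (real d)" using d0 by simp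
  have "2 * SC d K pe pd \<le> 1 + DC d K pe" using classical_bound[OF _ d1] h by blast
  then have dc: "1 / sqrt (real d) \<le> DC d K pe" using h unfolding S_star_def by simp
  have dc0: "0 \<le> DC d K pe" using dc sq0 by (smt (verit) divide_pos_pos)
  have q0: "0 < DQ d (inputs d) (rho d)" and q1: "DQ d (inputs d) (rho d) \<le> 1 / real d"
    using DQ_bounds[OF assms] by auto
  have "DC d K pe / (1 / real d) \<le> DC d K pe / DQ d (inputs d) (rho d)"
    using q0 q1 dc0 d0 by (intro divide_left_mono) auto
  moreover have "sqrt (real d) \<le> DC d K pe / (1 / real d)"
  proof -
    have "sqrt (real d) = (1 / sqrt (real d)) * real d"
      using d0 by (simp add: real_div_sqrt)
    also have "\<dots> \<le> DC d K pe * real d" using dc d0 by (intro mult_right_mono) auto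
    also have "\<dots> = DC d K pe / (1 / real d)" by simp
    finally show ?thesis .
  qed
  ultimately show "sqrt (real d) \<le> DC d K pe / DQ d (inputs d) (rho d)" by linarith
qed


end
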